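(* Let $\gamma_1,\gamma_2>0$ and consider the birth-death chain RDS $(\theta,\varphi)$ on $\mathbb{N}_0$ described in the context. Let $W_0=\{0,2,4,\dots\}$ and $W_1=\{1,3,5,\dots\}$. Then $(\theta,\varphi)$ is partially synchronizing with partition $\{W_0,W_1\}$: for each $i\in\{0,1\}$ and all $x,y\in W_i$, for $\mathbb{P}$-a.e. $q\in\mathcal{Q}_+$ there exists $n_0=n_0(x,y,q)\in\mathbb{N}_0$ with $\varphi^{n_0}_q(x)=\varphi^{n_0}_q(y)$.
   Context: Noise space: $\mathcal{Q}_+=\{q=(q_n)_{n\in\mathbb{N}_0}: q_n\in[0,1]\}$ with the product Borel $\sigma$-algebra and the product measure $\mathbb{P}=\lambda^{\mathbb{N}_0}$, $\lambda$ Lebesgue measure on $[0,1]$; shift $\theta(q_0,q_1,\dots)=(q_1,q_2,\dots)$. For $q\in\mathcal{Q}_+$ define $f_q:\mathbb{N}_0\to\mathbb{N}_0$ by $f_q(x)=x+1$ if $q_0<\frac{\gamma_1}{\gamma_1+\gamma_2x}$ and $f_q(x)=x-1$ otherwise. The cocycle is $\varphi^0_q(x)=x$ and $\varphi^n_q(x)=f_{\theta^{n-1}q}\circ\cdots\circ f_q(x)$ for $n\geq1$. An RDS is called synchronizing in $S$ if for every $x,y\in S$ and $\mathbb{P}$-a.e. $q$ there is $n_0$ with $\varphi^{n_0}_q(x)=\varphi^{n_0}_q(y)$; it is partially synchronizing with partition $\{W_0,\dots,W_{p-1}\}$ of the state space if it is synchronizing in each $W_i$. *)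

theory Defs
  imports "HOL-Probability.Probability"
begin

definition noise_measure :: "(nat \<Rightarrow> real) measure" where
  "noise_measure = Pi\<^sub>M UNIV (\<lambda>_. restrict_space lborel {0..1::real})"

definition shift :: "(nat \<Rightarrow> real) \<Rightarrow> (nat \<Rightarrow> real)" where
  "shift q = (\<lambda>n. q (Suc n))"

text \<open>One step of the birth-death chain (x - 1 is truncated subtraction on nat;
  it only matters at x = 0 on the null event q_0 = 1).\<close>
definition bd_step :: "real \<Rightarrow> real \<Rightarrow> (nat \<Rightarrow> real) \<Rightarrow> nat \<Rightarrow> nat" where
  "bd_step g1 g2 q x = (if q 0 < g1 / (g1 + g2 * real x) then x + 1 else x - 1)"

fun bd_cocycle :: "real \<Rightarrow> real \<Rightarrow> nat \<Rightarrow> (nat \<Rightarrow> real) \<Rightarrow> nat \<Rightarrow> nat" where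
  "bd_cocycle g1 g2 0 q x = x"
| "bd_cocycle g1 g2 (Suc n) q x = bd_step g1 g2 ((shift ^^ n) q) (bd_cocycle g1 g2 n q x)"

definition synchronizing_in ::
  "'q measure \<Rightarrow> (nat \<Rightarrow> 'q \<Rightarrow> 's \<Rightarrow> 's) \<Rightarrow> 's set \<Rightarrow> bool" where
  "synchronizing_in M \<phi> S \<longleftrightarrow>
     (\<forall>x\<in>S. \<forall>y\<in>S. AE q in M. \<exists>n0. \<phi> n0 q x = \<phi> n0 q y)"

definition partially_synchronizing ::
  "'q measure \<Rightarrow> (nat \<Rightarrow> 'q \<Rightarrow> 's \<Rightarrow> 's) \<Rightarrow> 's set set \<Rightarrow> bool" where
  "partially_synchronizing M \<phi> P \<longleftrightarrow>
     \<Union>P = UNIV \<and> {} \<notin> P \<and> (\<forall>A\<in>P. \<forall>B\<in>P. A \<noteq> B \<longrightarrow> A \<inter> B = {}) \<and>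
     (\<forall>W\<in>P. synchronizing_in M \<phi> W)"

end

theory Submission
  imports Defs
begin

definition M0 :: "real measure" where "M0 = restrict_space lborel {0..1}"

lemma prob_M0: "prob_space M0"
  unfolding M0_def by (auto intro!: prob_spaceI simp: emeasure_restrict_space space_restrict_space)

interpretation Q: sequence_space M0
  unfolding sequence_space_def product_prob_space_def product_prob_space_axioms_def product_sigma_finite_def
  using prob_M0 by (auto simp: prob_space_imp_sigma_finite)

lemma noise_eq: "noise_measure = Q.S"
  by (simp add: noise_measure_def M0_def)

lemma space_M0: "space M0 = {0..1}"
  by (simp add: M0_def space_restrict_space)

lemma M0_less: assumes "0 \<le> a" "a \<le> 1" shows "emeasure M0 {t\<in>space M0. t < a} = ennreal a"
proof -
  have "{t\<in>space M0. t < a} = {0..<a}" using assms by (auto simp: space_M0)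
  moreover have "{0..<a} \<in> sets lborel" by simp
  moreover have "emeasure M0 {0..<a} = ennreal a" unfolding M0_def
    using assms by (subst emeasure_restrict_space) auto
  ultimately show ?thesis by simp
qed

lemma markov:
  fixes F :: "(nat \<Rightarrow> real) \<Rightarrow> real \<Rightarrow> ennreal"
  assumes meas: "(\<lambda>(q,t). F q t) \<in> borel_measurable (Q.S \<Otimes>\<^sub>M M0)"
  and dep: "\<And>q q'. (\<And>j. j < n \<Longrightarrow> q j = q' j) \<Longrightarrow> F q = F q'"
  shows "(\<integral>\<^sup>+q. F q (q n) \<partial>Q.S) = (\<integral>\<^sup>+q. (\<integral>\<^sup>+t. F q t \<partial>M0) \<partial>Q.S)"
proof -
  have m1: "(\<lambda>q. F q (q n)) \<in> borel_measurable Q.S"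
  proof -
    have "(\<lambda>q. (q, q n)) \<in> Q.S \<rightarrow>\<^sub>M Q.S \<Otimes>\<^sub>M M0"
      by (intro measurable_Pair measurable_ident_sets) (auto intro: measurable_component_singleton)
    from measurable_comp[OF this meas] show ?thesis by (simp add: o_def)
  qed
  have "(\<integral>\<^sup>+q. F q (q n) \<partial>Q.S) = (\<integral>\<^sup>+q. F q (q n) \<partial>(distr (Q.S \<Otimes>\<^sub>M Q.S) Q.S (\<lambda>(\<omega>, \<omega>'). comb_seq n \<omega> \<omega>')))"
    by (simp add: Q.PiM_comb_seq)
  also have "\<dots> = (\<integral>\<^sup>+x. F (comb_seq n (fst x) (snd x)) (comb_seq n (fst x) (snd x) n) \<partial>(Q.S \<Otimes>\<^sub>M Q.S))"
    by (subst nn_integral_distr) (auto simp: split_beta' intro: m1)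
  also have "\<dots> = (\<integral>\<^sup>+x. F (fst x) (snd x 0) \<partial>(Q.S \<Otimes>\<^sub>M Q.S))"
  proof (rule nn_integral_cong)
    fix x :: "(nat \<Rightarrow> real) \<times> (nat \<Rightarrow> real)"
    have "F (comb_seq n (fst x) (snd x)) = F (fst x)" by (rule dep) (simp add: comb_seq_less)
    moreover have "comb_seq n (fst x) (snd x) n = snd x 0" using comb_seq_add[of n _ _ 0] by simp
    ultimately show "F (comb_seq n (fst x) (snd x)) (comb_seq n (fst x) (snd x) n) = F (fst x) (snd x 0)" by simp
  qed
  also have "\<dots> = (\<integral>\<^sup>+\<omega>. (\<integral>\<^sup>+\<omega>'. F \<omega> (\<omega>' 0) \<partial>Q.S) \<partial>Q.S)"
  proof -
    have "(\<lambda>x. (fst x, snd x 0)) \<in> Q.S \<Otimes>\<^sub>M Q.S \<rightarrow>\<^sub>M Q.S \<Otimes>\<^sub>M M0"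
      by (intro measurable_Pair) (auto intro: measurable_component_singleton measurable_compose[OF measurable_snd])
    from measurable_comp[OF this meas] have "(\<lambda>x. F (fst x) (snd x 0)) \<in> borel_measurable (Q.S \<Otimes>\<^sub>M Q.S)"
      by (simp add: o_def)
    from Q.P.nn_integral_fst[OF this] show ?thesis by simp
  qed
  also have "\<dots> = (\<integral>\<^sup>+q. (\<integral>\<^sup>+t. F q t \<partial>M0) \<partial>Q.S)"
  proof (rule nn_integral_cong)
    fix \<omega> assume w: "\<omega> \<in> space Q.S"
    have mF: "F \<omega> \<in> borel_measurable M0"
      using measurable_Pair2[OF meas w] by simp
    have "(\<integral>\<^sup>+t. F \<omega> t \<partial>M0) = (\<integral>\<^sup>+t. F \<omega> t \<partial>(distr Q.S M0 (\<lambda>\<omega>. \<omega> 0)))"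
      using Q.PiM_component[of 0] by simp
    also have "\<dots> = (\<integral>\<^sup>+\<omega>'. F \<omega> (\<omega>' 0) \<partial>Q.S)"
      by (subst nn_integral_distr) (auto intro: mF measurable_component_singleton)
    finally show "(\<integral>\<^sup>+\<omega>'. F \<omega> (\<omega>' 0) \<partial>Q.S) = (\<integral>\<^sup>+t. F \<omega> t \<partial>M0)" by simp
  qed
  finally show ?thesis .
qed

lemma shift_pow: "(shift ^^ n) q = (\<lambda>k. q (n + k))"
  by (induction n arbitrary: q) (auto simp: shift_def)

lemma coc_Suc: "bd_cocycle g1 g2 (Suc n) q x =
  (if q n < g1 / (g1 + g2 * real (bd_cocycle g1 g2 n q x)) then bd_cocycle g1 g2 n q x + 1
   else bd_cocycle g1 g2 n q x - 1)"
  by (simp add: bd_step_def shift_pow)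

lemma coc_dep: "(\<And>j. j < n \<Longrightarrow> q j = q' j) \<Longrightarrow> bd_cocycle g1 g2 n q x = bd_cocycle g1 g2 n q' x"
  by (induction n) (simp_all add: coc_Suc del: bd_cocycle.simps(2))

lemma comp_meas[measurable]: "(\<lambda>q. q n) \<in> borel_measurable Q.S"
proof -
  have "(\<lambda>x. x) \<in> M0 \<rightarrow>\<^sub>M borel" unfolding M0_def by (rule measurable_restrict_space1) simp
  from measurable_compose[OF measurable_component_singleton[of n UNIV "\<lambda>_. M0"] this]
  show ?thesis by simp
qed

lemma coc_meas[measurable]: "(\<lambda>q. bd_cocycle g1 g2 n q x) \<in> Q.S \<rightarrow>\<^sub>M count_space UNIV"
proof (induction n)
  case 0 then show ?case by simp
next
  case (Suc n)
  let ?G = "\<lambda>z q. if q n < g1 / (g1 + g2 * real z) then z + 1 else z - (1::nat)"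
  have "(\<lambda>q. ?G (bd_cocycle g1 g2 n q x) q) \<in> Q.S \<rightarrow>\<^sub>M count_space UNIV"
    by (rule measurable_compose_countable'[OF _ Suc]) auto
  then show ?case by (simp only: coc_Suc)
qed

lemma step_props:
  fixes g1 g2 t :: real and a b :: nat
  assumes g: "g1 > 0" "g2 > 0" and t: "t < 1" and ab: "a \<le> b" "even (a + b)"
  defines "A' \<equiv> (if t < g1 / (g1 + g2 * real a) then a + 1 else a - 1)"
  defines "B' \<equiv> (if t < g1 / (g1 + g2 * real b) then b + 1 else b - 1)"
  shows "A' \<le> B' \<and> even (A' + B')"
proof -
  have c0: "g1 / (g1 + g2 * real 0) = 1" using g by simp
  have anti: "g1 / (g1 + g2 * real b) \<le> g1 / (g1 + g2 * real a)"
  proof -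
    have p1: "0 < g1 + g2 * real a" "0 < g1 + g2 * real b" using g by (auto intro: add_pos_nonneg)
    have "g1 + g2 * real a \<le> g1 + g2 * real b" using g ab(1) by auto
    then show ?thesis using g p1 by (intro divide_left_mono) (auto intro: mult_pos_pos)
  qed
  have pa: "odd (A' + a)"
  proof (cases "a = 0")
    case True then show ?thesis using t c0 by (simp add: A'_def)
  next
    case False then show ?thesis by (auto simp: A'_def)
  qed
  have pb: "odd (B' + b)"
  proof (cases "b = 0")
    case True then show ?thesis using t c0 by (simp add: B'_def)
  next
    case False then show ?thesis by (auto simp: B'_def)
  qed
  have "even (A' + B')" using pa pb ab(2) by presburger
  moreover have "A' \<le> B'"
  proof (cases "a = b")
    case True then show ?thesis by (simp add: A'_def B'_def)
  next
    case False
    with ab have "a + 2 \<le> b" by presburger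
    then show ?thesis using anti by (auto simp: A'_def B'_def)
  qed
  ultimately show ?thesis by simp
qed

lemma coc_inv:
  assumes g: "g1 > 0" "g2 > 0" and q: "\<forall>j. q j < 1" and xy: "x \<le> y" "even (x + y)"
  shows "bd_cocycle g1 g2 n q x \<le> bd_cocycle g1 g2 n q y \<and>
         even (bd_cocycle g1 g2 n q x + bd_cocycle g1 g2 n q y)"
proof (induction n)
  case 0 then show ?case using xy by simp
next
  case (Suc n)
  then show ?case unfolding coc_Suc using step_props[OF g q[rule_format, of n]] by blast
qed

definition BB :: "real \<Rightarrow> real \<Rightarrow> real" where "BB g1 g2 = 2 / (1 - g1 / (g1 + g2 * 2))"
definition NN :: "real \<Rightarrow> real \<Rightarrow> nat" where "NN g1 g2 = nat \<lceil>3 * g1 / g2\<rceil>"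
definition VV :: "real \<Rightarrow> real \<Rightarrow> nat \<Rightarrow> real" where
  "VV g1 g2 z = (\<Sum>k\<in>{2..z}. BB g1 g2 ^ (NN g1 g2 - k))"

lemma BB_ge: assumes g: "g1 > 0" "g2 > 0" shows "BB g1 g2 \<ge> 2"
  and "(1 - g1 / (g1 + g2 * 2)) * BB g1 g2 = 2" and "g1 / (g1 + g2 * 2) < 1"
proof -
  have "g1 / (g1 + g2 * 2) < 1" using g by simp
  moreover have "g1 / (g1 + g2 * 2) > 0" using g by simp
  moreover have "\<And>x::real. 0 < x \<Longrightarrow> x < 1 \<Longrightarrow> 2 / (1 - x) \<ge> 2 \<and> (1 - x) * (2 / (1 - x)) = 2"
    by (auto simp: field_simps)
  ultimately show "BB g1 g2 \<ge> 2" "(1 - g1 / (g1 + g2 * 2)) * BB g1 g2 = 2" "g1 / (g1 + g2 * 2) < 1"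
    unfolding BB_def by blast+
qed

lemma VV_nonneg: assumes g: "g1 > 0" "g2 > 0" shows "VV g1 g2 z \<ge> 0"
  unfolding VV_def using BB_ge[OF g] by (intro sum_nonneg) simp

lemma VV_Suc: "VV g1 g2 (Suc z) = VV g1 g2 z + (if Suc z < 2 then 0 else BB g1 g2 ^ (NN g1 g2 - Suc z))"
  unfolding VV_def by (simp add: sum.cl_ivl_Suc)

lemma drift:
  assumes g: "g1 > 0" "g2 > 0" and z: "z \<ge> 2"
  defines "p \<equiv> g1 / (g1 + g2 * real z)"
  shows "p * VV g1 g2 (z + 1) + (1 - p) * VV g1 g2 (z - 1) + 1/2 \<le> VV g1 g2 z"
proof -
  let ?B = "BB g1 g2" and ?N = "NN g1 g2"
  define P2 where "P2 = g1 / (g1 + g2 * 2)"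
  have B: "?B \<ge> 2" "(1 - P2) * ?B = 2" "P2 < 1" using BB_ge[OF g] by (auto simp: P2_def)
  have p0: "0 < p" using g by (simp add: p_def add_pos_nonneg)
  have pP2: "p \<le> P2" unfolding p_def P2_def using g z
    by (intro divide_left_mono) (auto intro!: mult_pos_pos add_pos_nonneg)
  define D where "D = ?B ^ (?N - (z + 1))"
  define E where "E = ?B ^ (?N - z)"
  have D1: "D \<ge> 1" using B by (simp add: D_def one_le_power)
  have V1: "VV g1 g2 (z + 1) = VV g1 g2 z + D" using VV_Suc[of g1 g2 z] z by (simp add: D_def)
  have V2: "VV g1 g2 z = VV g1 g2 (z - 1) + E" using VV_Suc[of g1 g2 "z - 1"] z by (simp add: E_def)
  have key: "p * D - (1 - p) * E + 1/2 \<le> 0"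
  proof (cases "z \<ge> ?N")
    case True
    then have DE: "D = 1" "E = 1" by (auto simp: D_def E_def)
    have "real z \<ge> 3 * g1 / g2" using True unfolding NN_def
      using order_trans[OF real_nat_ceiling_ge[of "3 * g1 / g2"]] of_nat_le_iff by blast
    then have "3 * g1 \<le> g2 * real z" using g by (simp add: field_simps)
    then have "p \<le> 1/4" unfolding p_def using g by (simp add: field_simps add_pos_nonneg)
    then show ?thesis using DE by simp
  next
    case False
    then have "?N - z = Suc (?N - (z + 1))" by simp
    then have E: "E = ?B * D" by (simp add: E_def D_def)
    have "(1 - p) * ?B \<ge> (1 - P2) * ?B" using pP2 B by (intro mult_right_mono) auto
    then have "(1 - p) * ?B \<ge> 2" using B by simp
    then have "(1 - p) * E \<ge> 2 * D" unfolding E using D1 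
      by (metis mult.assoc mult_right_mono order_trans zero_le_one)
    moreover have "p * D \<le> D" using pP2 B D1 by (simp add: mult_le_cancel_right1)
    ultimately show ?thesis using D1 by linarith
  qed
  have "p * VV g1 g2 (z + 1) + (1 - p) * VV g1 g2 (z - 1) + 1/2
        = VV g1 g2 z + (p * D - (1 - p) * E + 1/2)"
    unfolding V1 V2 by (simp add: algebra_simps)
  with key show ?thesis by simp
qed

lemma sets_M0: "A \<subseteq> {0..1} \<Longrightarrow> A \<in> sets lborel \<Longrightarrow> A \<in> sets M0"
  unfolding M0_def by (subst sets_restrict_space_iff) auto

lemma int_M0:
  assumes c: "0 \<le> c" "c \<le> 1" and ab: "0 \<le> a" "0 \<le> b"
  shows "(\<integral>\<^sup>+t. ennreal (if t < c then a else b) \<partial>M0) = ennreal (c * a + (1 - c) * b)"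
proof -
  have e1: "emeasure M0 {0..<c} = ennreal c" unfolding M0_def
    using c by (subst emeasure_restrict_space) auto
  have e2: "emeasure M0 {c..1} = ennreal (1 - c)" unfolding M0_def
    using c by (subst emeasure_restrict_space) auto
  have s1: "{0..<c} \<in> sets M0" "{c..1} \<in> sets M0" using c by (auto intro!: sets_M0)
  have "(\<integral>\<^sup>+t. ennreal (if t < c then a else b) \<partial>M0) =
        (\<integral>\<^sup>+t. ennreal a * indicator {0..<c} t + ennreal b * indicator {c..1} t \<partial>M0)"
    by (rule nn_integral_cong) (auto simp: indicator_def space_M0)
  also have "\<dots> = ennreal a * emeasure M0 {0..<c} + ennreal b * emeasure M0 {c..1}"
    using s1 by (simp add: nn_integral_add nn_integral_cmult_indicator)
  also have "\<dots> = ennreal (c * a + (1 - c) * b)"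
    using c ab by (simp add: e1 e2 ennreal_mult ennreal_plus mult.commute)
  finally show ?thesis .
qed

context
  fixes g1 g2 :: real and y :: nat
  assumes g: "g1 > 0" "g2 > 0"
begin

abbreviation "U n q \<equiv> bd_cocycle g1 g2 n q y"

lemma A_pred[measurable]: "Measurable.pred Q.S (\<lambda>q. \<forall>m\<le>n. 2 \<le> U m q)"
proof -
  have s: "{q\<in>space Q.S. 2 \<le> U m q} \<in> sets Q.S" for m
  proof -
    have "(\<lambda>q. U m q) -` {2..} \<inter> space Q.S \<in> sets Q.S"
      by (rule measurable_sets[OF coc_meas]) simp
    moreover have "(\<lambda>q. U m q) -` {2..} \<inter> space Q.S = {q\<in>space Q.S. 2 \<le> U m q}" by auto
    ultimately show ?thesis by simp
  qed
  have "{q\<in>space Q.S. \<forall>m\<le>n. 2 \<le> U m q} = (\<Inter>m\<in>{..n}. {q\<in>space Q.S. 2 \<le> U m q})"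
    by auto
  also have "\<dots> \<in> sets Q.S" using s by (intro sets.finite_INT) auto
  finally show ?thesis using pred_def by blast
qed

definition EE :: "nat \<Rightarrow> ennreal" where
  "EE n = (\<integral>\<^sup>+q. (if \<forall>m\<le>n. 2 \<le> U m q then ennreal (VV g1 g2 (U n q)) else 0) \<partial>Q.S)"

definition PP :: "nat \<Rightarrow> ennreal" where
  "PP n = emeasure Q.S {q\<in>space Q.S. \<forall>m\<le>n. 2 \<le> U m q}"

lemma step_EE: "EE (Suc n) + ennreal (1/2) * PP n \<le> EE n"
proof -
  define F where "F q t = (if \<forall>m\<le>n. 2 \<le> U m q then
      ennreal (VV g1 g2 (if t < g1 / (g1 + g2 * real (U n q)) then U n q + 1 else U n q - 1)) else 0)"
    for q :: "nat \<Rightarrow> real" and t :: real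
  have Fm: "(\<lambda>(q,t). F q t) \<in> borel_measurable (Q.S \<Otimes>\<^sub>M M0)"
  proof -
    have "(\<lambda>x. F (fst x) (snd x)) \<in> borel_measurable (Q.S \<Otimes>\<^sub>M M0)"
      unfolding F_def
    proof (rule measurable_compose_countable'[where g="\<lambda>x. U n (fst x)" and I=UNIV])
      have sm: "(\<lambda>x. snd x) \<in> borel_measurable (Q.S \<Otimes>\<^sub>M M0)"
      proof -
        have "(\<lambda>x. x) \<in> M0 \<rightarrow>\<^sub>M borel" unfolding M0_def by (rule measurable_restrict_space1) simp
        from measurable_compose[OF measurable_snd this] show ?thesis .
      qed
      have am: "Measurable.pred (Q.S \<Otimes>\<^sub>M M0) (\<lambda>x. \<forall>m\<le>n. 2 \<le> U m (fst x))"
        using measurable_compose[OF measurable_fst A_pred] by simp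
      note sm[measurable] am[measurable]
      fix i :: nat
      show "(\<lambda>x. if \<forall>m\<le>n. 2 \<le> U m (fst x) then ennreal (VV g1 g2 (if snd x < g1 / (g1 + g2 * real i) then i + 1 else i - 1)) else 0)
         \<in> borel_measurable (Q.S \<Otimes>\<^sub>M M0)"
      proof (rule measurable_If)
        have "sm -` {..<g1 / (g1 + g2 * real i)} \<inter> space (Q.S \<Otimes>\<^sub>M M0) \<in> sets (Q.S \<Otimes>\<^sub>M M0)"
          if "sm \<in> borel_measurable (Q.S \<Otimes>\<^sub>M M0)" for sm :: "_ \<Rightarrow> real"
          using measurable_sets[OF that, of "{..<g1 / (g1 + g2 * real i)}"] by simp
        from this[OF sm] have s1: "{x\<in>space (Q.S \<Otimes>\<^sub>M M0). snd x < g1 / (g1 + g2 * real i)} \<in> sets (Q.S \<Otimes>\<^sub>M M0)"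
          by (simp add: vimage_def Int_def conj_commute)
        have "(\<lambda>x. if snd x < g1 / (g1 + g2 * real i) then ennreal (VV g1 g2 (i + 1)) else ennreal (VV g1 g2 (i - 1)))
           \<in> borel_measurable (Q.S \<Otimes>\<^sub>M M0)"
          by (rule measurable_If[OF measurable_const measurable_const s1]) simp_all
        then show "(\<lambda>x. ennreal (VV g1 g2 (if snd x < g1 / (g1 + g2 * real i) then i + 1 else i - 1)))
           \<in> borel_measurable (Q.S \<Otimes>\<^sub>M M0)"
          by (simp add: if_distrib)
      next
        show "(\<lambda>x. 0::ennreal) \<in> borel_measurable (Q.S \<Otimes>\<^sub>M M0)" by simp
      next
        show "{x \<in> space (Q.S \<Otimes>\<^sub>M M0). \<forall>m\<le>n. 2 \<le> U m (fst x)} \<in> sets (Q.S \<Otimes>\<^sub>M M0)"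
          using am by (simp only: pred_def)
      qed
    next
      show "(\<lambda>x. U n (fst x)) \<in> Q.S \<Otimes>\<^sub>M M0 \<rightarrow>\<^sub>M count_space UNIV"
        by (rule measurable_compose[OF measurable_fst coc_meas])
    qed simp
    then show ?thesis by (simp add: split_beta')
  qed
  have Fd: "F q = F q'" if "\<And>j. j < n \<Longrightarrow> q j = q' j" for q q'
  proof -
    have "U m q = U m q'" if "m \<le> n" for m using that \<open>\<And>j. j < n \<Longrightarrow> q j = q' j\<close>
      by (intro coc_dep) auto
    then show ?thesis unfolding F_def by (auto intro!: ext)
  qed
  have "EE (Suc n) \<le> (\<integral>\<^sup>+q. F q (q n) \<partial>Q.S)"
    unfolding EE_def F_def by (intro nn_integral_mono) (auto simp: coc_Suc simp del: bd_cocycle.simps(2))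
  also have "\<dots> = (\<integral>\<^sup>+q. (\<integral>\<^sup>+t. F q t \<partial>M0) \<partial>Q.S)"
    by (rule markov[OF Fm Fd])
  finally have 1: "EE (Suc n) \<le> (\<integral>\<^sup>+q. (\<integral>\<^sup>+t. F q t \<partial>M0) \<partial>Q.S)" .
  have 2: "ennreal (1/2) * PP n = (\<integral>\<^sup>+q. ennreal (1/2) * indicator {q\<in>space Q.S. \<forall>m\<le>n. 2 \<le> U m q} q \<partial>Q.S)"
    unfolding PP_def by (subst nn_integral_cmult_indicator) auto
  have Im: "(\<lambda>q. \<integral>\<^sup>+t. F q t \<partial>M0) \<in> borel_measurable Q.S"
    using sigma_finite_measure.borel_measurable_nn_integral[OF prob_space_imp_sigma_finite[OF prob_M0] Fm] by simp
  have "EE (Suc n) + ennreal (1/2) * PP n \<le>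
     (\<integral>\<^sup>+q. (\<integral>\<^sup>+t. F q t \<partial>M0) \<partial>Q.S) + (\<integral>\<^sup>+q. ennreal (1/2) * indicator {q\<in>space Q.S. \<forall>m\<le>n. 2 \<le> U m q} q \<partial>Q.S)"
    using 1 2 by (simp add: add_right_mono)
  also have "\<dots> = (\<integral>\<^sup>+q. (\<integral>\<^sup>+t. F q t \<partial>M0) + ennreal (1/2) * indicator {q\<in>space Q.S. \<forall>m\<le>n. 2 \<le> U m q} q \<partial>Q.S)"
    by (rule nn_integral_add[symmetric]) (use Im in auto)
  also have "\<dots> \<le> EE n" unfolding EE_def
  proof (rule nn_integral_mono)
    fix q assume q: "q \<in> space Q.S"
    show "(\<integral>\<^sup>+t. F q t \<partial>M0) + ennreal (1/2) * indicator {q\<in>space Q.S. \<forall>m\<le>n. 2 \<le> U m q} q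
       \<le> (if \<forall>m\<le>n. 2 \<le> U m q then ennreal (VV g1 g2 (U n q)) else 0)"
    proof (cases "\<forall>m\<le>n. 2 \<le> U m q")
      case True
      define z where "z = U n q"
      have z2: "z \<ge> 2" using True by (simp add: z_def)
      define c where "c = g1 / (g1 + g2 * real z)"
      have c: "0 \<le> c" "c \<le> 1" using g by (auto simp: c_def add_pos_nonneg)
      have "(\<integral>\<^sup>+t. F q t \<partial>M0) = (\<integral>\<^sup>+t. ennreal (if t < c then VV g1 g2 (z + 1) else VV g1 g2 (z - 1)) \<partial>M0)"
        using True by (intro nn_integral_cong) (simp add: F_def c_def z_def)
      also have "\<dots> = ennreal (c * VV g1 g2 (z + 1) + (1 - c) * VV g1 g2 (z - 1))"
        by (rule int_M0[OF c VV_nonneg[OF g] VV_nonneg[OF g]])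
      finally have I: "(\<integral>\<^sup>+t. F q t \<partial>M0) = ennreal (c * VV g1 g2 (z + 1) + (1 - c) * VV g1 g2 (z - 1))" .
      have d: "c * VV g1 g2 (z + 1) + (1 - c) * VV g1 g2 (z - 1) + 1/2 \<le> VV g1 g2 z"
        using drift[OF g z2] by (simp add: c_def)
      have nn: "0 \<le> c * VV g1 g2 (z + 1) + (1 - c) * VV g1 g2 (z - 1)"
        using c VV_nonneg[OF g] by simp
      define X where "X = c * VV g1 g2 (z + 1) + (1 - c) * VV g1 g2 (z - 1)"
      have "ennreal X + ennreal (1/2) = ennreal (X + 1/2)"
        using ennreal_plus[of X "1/2"] nn by (simp add: X_def)
      also have "\<dots> \<le> ennreal (VV g1 g2 z)" using d by (intro ennreal_leI) (simp add: X_def)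
      finally have e: "ennreal X + ennreal (1/2) \<le> ennreal (VV g1 g2 z)" .
      have "(\<integral>\<^sup>+t. F q t \<partial>M0) + ennreal (1/2) * indicator {q\<in>space Q.S. \<forall>m\<le>n. 2 \<le> U m q} q
        = ennreal X + ennreal (1/2)" using True q I by (simp add: X_def)
      then show ?thesis using e True by (simp add: z_def)
    next
      case False
      then have "F q = (\<lambda>t. 0)" by (intro ext) (simp only: F_def if_not_P[OF False] if_False)
      then show ?thesis using False by simp
    qed
  qed
  finally show ?thesis .
qed


lemma EE0: "EE 0 \<le> ennreal (VV g1 g2 y)"
proof -
  have "EE 0 \<le> (\<integral>\<^sup>+q. ennreal (VV g1 g2 y) \<partial>Q.S)"
    unfolding EE_def by (intro nn_integral_mono) auto
  also have "\<dots> = ennreal (VV g1 g2 y)" by (simp add: Q.emeasure_space_1)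
  finally show ?thesis .
qed

definition Pinf :: ennreal where "Pinf = emeasure Q.S {q\<in>space Q.S. \<forall>m. 2 \<le> U m q}"

lemma Ainf_sets: "{q\<in>space Q.S. \<forall>m. 2 \<le> U m q} \<in> sets Q.S"
proof -
  have "{q\<in>space Q.S. \<forall>m. 2 \<le> U m q} = (\<Inter>n. {q\<in>space Q.S. \<forall>m\<le>n. 2 \<le> U m q})" by auto
  also have "\<dots> \<in> sets Q.S" using A_pred pred_def by (intro sets.countable_INT') auto
  finally show ?thesis .
qed

lemma PP_ge: "Pinf \<le> PP n"
  unfolding Pinf_def PP_def using A_pred[of n] by (intro emeasure_mono) (auto simp: pred_def)

lemma tele: "EE n + ennreal (real n / 2) * Pinf \<le> EE 0"
proof (induction n)
  case 0 then show ?case by simp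
next
  case (Suc n)
  have "ennreal (real (Suc n) / 2) = ennreal (1/2) + ennreal (real n / 2)"
    by (subst ennreal_plus[symmetric]) (auto simp: field_simps)
  then have "EE (Suc n) + ennreal (real (Suc n) / 2) * Pinf =
      (EE (Suc n) + ennreal (1/2) * Pinf) + ennreal (real n / 2) * Pinf"
    by (simp add: distrib_right add.assoc)
  also have "\<dots> \<le> (EE (Suc n) + ennreal (1/2) * PP n) + ennreal (real n / 2) * Pinf"
    using PP_ge[of n] by (intro add_right_mono add_left_mono mult_left_mono) auto
  also have "\<dots> \<le> EE n + ennreal (real n / 2) * Pinf"
    using step_EE[of n] by (intro add_right_mono)
  also have "\<dots> \<le> EE 0" by (rule Suc)
  finally show ?case .
qed

lemma Pinf_zero: "Pinf = 0"
proof -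
  define \<mu> where "\<mu> = measure Q.S {q\<in>space Q.S. \<forall>m. 2 \<le> U m q}"
  have Pm: "Pinf = ennreal \<mu>" unfolding Pinf_def \<mu>_def by (rule Q.emeasure_eq_measure)
  have mu0: "\<mu> \<ge> 0" by (simp add: \<mu>_def)
  have b: "real n / 2 * \<mu> \<le> VV g1 g2 y" for n
  proof -
    have "ennreal (real n / 2) * Pinf \<le> ennreal (VV g1 g2 y)"
    proof -
      have "ennreal (real n / 2) * Pinf \<le> EE n + ennreal (real n / 2) * Pinf" by simp
      also have "\<dots> \<le> EE 0" by (rule tele)
      also have "\<dots> \<le> ennreal (VV g1 g2 y)" by (rule EE0)
      finally show ?thesis .
    qed
    then have "ennreal (real n / 2 * \<mu>) \<le> ennreal (VV g1 g2 y)"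
      using mu0 ennreal_mult[of "real n / 2" \<mu>] by (simp add: Pm)
    then show ?thesis using VV_nonneg[OF g] by (simp add: ennreal_le_iff)
  qed
  have "\<mu> = 0"
  proof (rule ccontr)
    assume "\<mu> \<noteq> 0"
    then have "\<mu> / 2 > 0" using mu0 by simp
    from ex_less_of_nat_mult[OF this] obtain n where "VV g1 g2 y < real n * (\<mu> / 2)" by blast
    with b[of n] show False by simp
  qed
  then show ?thesis using Pm by simp
qed

lemma hit: "AE q in Q.S. \<exists>n. U n q \<le> 1"
proof (rule AE_I')
  show "{q\<in>space Q.S. \<forall>m. 2 \<le> U m q} \<in> null_sets Q.S"
    using Ainf_sets Pinf_zero unfolding Pinf_def by (simp add: null_sets_def)
  show "{q \<in> space Q.S. \<not> (\<exists>n. U n q \<le> 1)} \<subseteq> {q\<in>space Q.S. \<forall>m. 2 \<le> U m q}"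
    by (auto simp: not_le numeral_2_eq_2 Suc_le_eq)
qed

end

lemma lt1: "AE q in Q.S. \<forall>j. q j < 1"
proof (rule AE_all_countable[THEN iffD2], intro allI)
  fix j
  show "AE q in Q.S. q j < 1"
  proof (rule AE_I')
    have "emeasure Q.S {x\<in>space Q.S. x j \<in> {1}} = emeasure M0 {1}"
      by (rule Q.emeasure_PiM_Collect_single) (auto intro: sets_M0)
    also have "\<dots> = 0" unfolding M0_def by (subst emeasure_restrict_space) auto
    finally show "{x\<in>space Q.S. x j \<in> {1}} \<in> null_sets Q.S"
      by (auto simp: null_sets_def)
    show "{q \<in> space Q.S. \<not> q j < 1} \<subseteq> {x\<in>space Q.S. x j \<in> {1}}"
      by (auto simp: space_PiM space_M0 PiE_iff) (meson antisym not_le)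
  qed
qed

lemma sync:
  assumes g: "g1 > 0" "g2 > 0" and xy: "x \<le> y" "even (x + y)"
  shows "AE q in Q.S. \<exists>n. bd_cocycle g1 g2 n q x = bd_cocycle g1 g2 n q y"
  using hit[OF g, of y] lt1
proof eventually_elim
  case (elim q)
  then obtain n where n: "bd_cocycle g1 g2 n q y \<le> 1" by blast
  from coc_inv[OF g _ xy, of q n] elim have
    "bd_cocycle g1 g2 n q x \<le> bd_cocycle g1 g2 n q y"
    "even (bd_cocycle g1 g2 n q x + bd_cocycle g1 g2 n q y)" by auto
  with n have "bd_cocycle g1 g2 n q x = bd_cocycle g1 g2 n q y"
    by (cases "bd_cocycle g1 g2 n q y"; cases "bd_cocycle g1 g2 n q x") auto
  then show ?case by blast
qed

theorem corollary3p4: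
  fixes g1 g2 :: real
  assumes "g1 > 0" and "g2 > 0"
  shows "partially_synchronizing noise_measure (bd_cocycle g1 g2)
           {{x. even x}, {x. odd x}}"
proof -
  have W: "synchronizing_in Q.S (bd_cocycle g1 g2) W"
    if "\<forall>x\<in>W. \<forall>y\<in>W. even (x + y)" for W
    unfolding synchronizing_in_def
  proof (intro ballI)
    fix x y assume "x \<in> W" "y \<in> W"
    then have e: "even (x + y)" using that by blast
    show "AE q in Q.S. \<exists>n0. bd_cocycle g1 g2 n0 q x = bd_cocycle g1 g2 n0 q y"
    proof (cases "x \<le> y")
      case True then show ?thesis using sync[OF assms True e] by simp
    next
      case False
      then have "y \<le> x" by simp
      from sync[OF assms this] e show ?thesis by (auto simp: add.commute eq_commute)
    qed
  qed
  have "synchronizing_in Q.S (bd_cocycle g1 g2) {x. even x}" by (rule W) auto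
  moreover have "synchronizing_in Q.S (bd_cocycle g1 g2) {x. odd x}" by (rule W) auto
  moreover have "\<Union>{{x::nat. even x}, {x. odd x}} = UNIV" by auto
  moreover have "{} \<notin> {{x::nat. even x}, {x. odd x}}"
  proof -
    have "(0::nat) \<in> {x. even x}" "(1::nat) \<in> {x. odd x}" by auto
    then show ?thesis by (metis empty_iff insert_iff)
  qed
  moreover have "{x::nat. even x} \<inter> {x. odd x} = {}" by auto
  ultimately show ?thesis unfolding partially_synchronizing_def noise_eq by auto
qed

end
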